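(* Let $n,t$ be positive integers, $\sigma\in(0,1]$ with $\sigma n$ an integer, and $\alpha>0$ such that $k=\alpha/\sigma$ is a positive integer. For each $j\in[t]$ let $S_j$ be a map assigning to each $(x_1,\dots,x_{j-1})\in[n]^{j-1}$ a subset $S_j(x_1,\dots,x_{j-1})\subseteq[n]$ of size $\sigma n$; the associated adaptive sequence $\mathfrak{D}$ draws $X_j$ uniformly from $S_j(X_1,\dots,X_{j-1})$ for $j=1,\dots,t$. Construct $(X_1,Z_1^{(1)},\dots,Z_k^{(1)},\dots,X_t,Z_1^{(t)},\dots,Z_k^{(t)})$ as follows: for $j=1,\dots,t$, draw $Y_1^{(j)},\dots,Y_k^{(j)}$ independently and uniformly from $[n]$; for each $i$ with $Y_i^{(j)}\notin S_j(X_1,\dots,X_{j-1})$ set $Z_i^{(j)}=Y_i^{(j)}$; for each $i$ with $Y_i^{(j)}\in S_j(X_1,\dots,X_{j-1})$ draw $\tilde W_i^{(j)}$ uniformly and independently from $S_j(X_1,\dots,X_{j-1})$ and set $Z_i^{(j)}=\tilde W_i^{(j)}$; if some $Y_i^{(j)}\in S_j(X_1,\dots,X_{j-1})$, let $X_j$ be chosen uniformly at random among the drawn $\tilde W_i^{(j)}$, and otherwise draw $X_j$ uniformly from $S_j(X_1,\dots,X_{j-1})$ independently. Then: (a) $X_1,\dots,X_t$ is distributed according to $\mathfrak{D}$; (b) each $Z_i^{(j)}$ is uniformly distributed on $[n]$; (c) the $Z_i^{(j)}$ ($i\in[k]$, $j\in[t]$) are all mutually independent; (d) with probability at least $1-t(1-\sigma)^{\alpha/\sigma}$,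 $\{X_1,\dots,X_t\}\subseteq\{Z_i^{(j)} : i\in[k],\ j\in[t]\}$. *)

theory Defs
  imports "HOL-Probability.Probability"
begin

text \<open>[n] is rendered as {1..n}.  A schedule S assigns to step j and history
  xs = [x_1,...,x_{j-1}] the set S j xs.\<close>

fun seq_pmf :: "'a pmf list \<Rightarrow> 'a list pmf" where
  "seq_pmf [] = return_pmf []"
| "seq_pmf (p # ps) = do { x \<leftarrow> p; xs \<leftarrow> seq_pmf ps; return_pmf (x # xs) }"

fun adaptive :: "(nat \<Rightarrow> nat list \<Rightarrow> nat set) \<Rightarrow> nat \<Rightarrow> nat list pmf" where
  "adaptive S 0 = return_pmf []"
| "adaptive S (Suc j) = do { xs \<leftarrow> adaptive S j; x \<leftarrow> pmf_of_set (S (Suc j) xs); return_pmf (xs @ [x]) }"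

definition coupling_step :: "(nat \<Rightarrow> nat list \<Rightarrow> nat set) \<Rightarrow> nat \<Rightarrow> nat \<Rightarrow> nat \<Rightarrow> nat list
    \<Rightarrow> (nat \<times> nat list) pmf" where
  "coupling_step S n k j xs = do {
     Ys \<leftarrow> seq_pmf (replicate k (pmf_of_set {1..n}));
     Ws \<leftarrow> seq_pmf (map (\<lambda>y. if y \<in> S j xs then map_pmf Some (pmf_of_set (S j xs))
                                 else return_pmf None) Ys);
     let Zs = map2 (\<lambda>y w. case w of Some w' \<Rightarrow> w' | None \<Rightarrow> y) Ys Ws;
     let I = {i. i < k \<and> Ys ! i \<in> S j xs};
     X \<leftarrow> (if I \<noteq> {} then map_pmf (\<lambda>i. the (Ws ! i)) (pmf_of_set I)
           else pmf_of_set (S j xs));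
     return_pmf (X, Zs) }"

fun coupling :: "(nat \<Rightarrow> nat list \<Rightarrow> nat set) \<Rightarrow> nat \<Rightarrow> nat \<Rightarrow> nat \<Rightarrow> (nat \<times> nat list) list pmf" where
  "coupling S n k 0 = return_pmf []"
| "coupling S n k (Suc j) = do { h \<leftarrow> coupling S n k j;
      r \<leftarrow> coupling_step S n k (Suc j) (map fst h); return_pmf (h @ [r]) }"

end

theory Submission
  imports Defs
begin


lemma seq_pmf_set:
  "xs \<in> set_pmf (seq_pmf ps) \<Longrightarrow> length xs = length ps \<and> (\<forall>i<length ps. xs!i \<in> set_pmf (ps!i))"
proof (induction ps arbitrary: xs)
  case Nil then show ?case by simp
next
  case (Cons p ps)
  then obtain y ys where "xs = y # ys" "y \<in> set_pmf p" "ys \<in> set_pmf (seq_pmf ps)" by auto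
  with Cons.IH[of ys] show ?case by (auto simp: nth_Cons split: nat.splits)
qed

lemma seq_pmf_nth:
  "i < length ps \<Longrightarrow> map_pmf (\<lambda>xs. xs!i) (seq_pmf ps) = ps!i"
proof (induction ps arbitrary: i)
  case Nil then show ?case by simp
next
  case (Cons p ps)
  show ?case
  proof (cases i)
    case 0
    then show ?thesis by (simp add: map_bind_pmf bind_return_pmf')
  next
    case (Suc i')
    have "map_pmf (\<lambda>xs. xs ! i) (seq_pmf (p # ps)) = bind_pmf p (\<lambda>x. map_pmf (\<lambda>xs. xs!i') (seq_pmf ps))"
      by (simp add: Suc map_bind_pmf map_pmf_def bind_assoc_pmf bind_return_pmf)
    also have "\<dots> = ps ! i'" using Cons Suc by simp
    finally show ?thesis using Suc by simp
  qed
qed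

lemma seq_pmf_snoc:
  "seq_pmf (ps @ [p]) = bind_pmf (seq_pmf ps) (\<lambda>xs. bind_pmf p (\<lambda>x. return_pmf (xs @ [x])))"
  by (induction ps) (simp_all add: bind_assoc_pmf bind_return_pmf bind_return_pmf')

lemma seq_pmf_Pi:
  "map_pmf (\<lambda>zs i. if i < m then zs!i else d) (seq_pmf (replicate m P)) = Pi_pmf {..<m} d (\<lambda>_. P)"
proof (induction m)
  case 0 then show ?case by simp
next
  case (Suc m)
  have "Pi_pmf {..<Suc m} d (\<lambda>_. P) = Pi_pmf (insert m {..<m}) d (\<lambda>_. P)"
    by (simp add: lessThan_Suc)
  also have "\<dots> = bind_pmf P (\<lambda>y. bind_pmf (Pi_pmf {..<m} d (\<lambda>_. P)) (\<lambda>f. return_pmf (f(m := y))))"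
    by (subst Pi_pmf_insert') auto
  also have "\<dots> = bind_pmf P (\<lambda>y. bind_pmf (seq_pmf (replicate m P)) (\<lambda>zs. return_pmf ((\<lambda>i. if i < m then zs!i else d)(m := y))))"
    by (simp add: Suc.IH[symmetric] bind_map_pmf)
  also have "\<dots> = bind_pmf (seq_pmf (replicate m P)) (\<lambda>zs. bind_pmf P (\<lambda>y. return_pmf ((\<lambda>i. if i < m then zs!i else d)(m := y))))"
    by (rule bind_commute_pmf)
  also have "\<dots> = bind_pmf (seq_pmf (replicate m P)) (\<lambda>zs. bind_pmf P (\<lambda>y. return_pmf ((\<lambda>i. if i < Suc m then (zs @ [y])!i else d))))"
  proof (intro bind_pmf_cong refl arg_cong[where f=return_pmf])
    fix zs y assume "zs \<in> set_pmf (seq_pmf (replicate m P))"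
    then have "length zs = m" using seq_pmf_set by fastforce
    then show "(\<lambda>i. if i < m then zs!i else d)(m := y) = (\<lambda>i. if i < Suc m then (zs @ [y])!i else d)"
      by (auto simp: fun_eq_iff nth_append)
  qed
  also have "\<dots> = map_pmf (\<lambda>zs i. if i < Suc m then zs!i else d) (seq_pmf (replicate (Suc m) P))"
  proof -
    have "replicate (Suc m) P = replicate m P @ [P]" by (simp add: replicate_append_same)
    then show ?thesis by (simp only: seq_pmf_snoc map_bind_pmf map_return_pmf)
  qed
  finally show ?case ..
qed

lemma seq_pmf_map2:
  "bind_pmf (seq_pmf ps) (\<lambda>Ys. map_pmf (map2 g Ys) (seq_pmf (map f Ys))) =
   seq_pmf (map (\<lambda>p. bind_pmf p (\<lambda>y. map_pmf (g y) (f y))) ps)"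
proof (induction ps)
  case Nil then show ?case by (simp add: bind_return_pmf)
next
  case (Cons p ps)
  have "bind_pmf (seq_pmf (p # ps)) (\<lambda>Ys. map_pmf (map2 g Ys) (seq_pmf (map f Ys))) =
    bind_pmf p (\<lambda>y. bind_pmf (seq_pmf ps) (\<lambda>ys. bind_pmf (f y) (\<lambda>w. bind_pmf (seq_pmf (map f ys)) (\<lambda>ws. return_pmf (g y w # map2 g ys ws)))))"
    by (simp add: bind_assoc_pmf bind_return_pmf map_bind_pmf map_pmf_def)
  also have "\<dots> = bind_pmf p (\<lambda>y. bind_pmf (f y) (\<lambda>w. bind_pmf (seq_pmf ps) (\<lambda>ys. bind_pmf (seq_pmf (map f ys)) (\<lambda>ws. return_pmf (g y w # map2 g ys ws)))))"
    by (subst bind_commute_pmf) (rule refl)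
  also have "\<dots> = seq_pmf (map (\<lambda>p. bind_pmf p (\<lambda>y. map_pmf (g y) (f y))) (p # ps))"
  proof -
    have IH': "seq_pmf (map (\<lambda>p. bind_pmf p (\<lambda>y. map_pmf (g y) (f y))) ps) =
       bind_pmf (seq_pmf ps) (\<lambda>ys. bind_pmf (seq_pmf (map f ys)) (\<lambda>ws. return_pmf (map2 g ys ws)))"
      using Cons.IH by (simp add: map_pmf_def)
    show ?thesis by (simp only: list.map seq_pmf.simps IH' bind_assoc_pmf bind_return_pmf bind_map_pmf)
  qed
  finally show ?case .
qed



definition fW :: "nat set \<Rightarrow> nat \<Rightarrow> nat option pmf" where
  "fW T y = (if y \<in> T then map_pmf Some (pmf_of_set T) else return_pmf None)"

definition gZ :: "nat \<Rightarrow> nat option \<Rightarrow> nat" where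
  "gZ y w = (case w of Some w' \<Rightarrow> w' | None \<Rightarrow> y)"

definition cX :: "nat set \<Rightarrow> nat \<Rightarrow> nat list \<Rightarrow> nat option list \<Rightarrow> nat pmf" where
  "cX T k Ys Ws = (if {i. i < k \<and> Ys ! i \<in> T} \<noteq> {} then map_pmf (\<lambda>i. the (Ws ! i)) (pmf_of_set {i. i < k \<and> Ys ! i \<in> T})
           else pmf_of_set T)"

lemma coupling_step_alt:
  "coupling_step S n k j xs = bind_pmf (seq_pmf (replicate k (pmf_of_set {1..n})))
     (\<lambda>Ys. bind_pmf (seq_pmf (map (fW (S j xs)) Ys))
     (\<lambda>Ws. bind_pmf (cX (S j xs) k Ys Ws) (\<lambda>X. return_pmf (X, map2 gZ Ys Ws))))"
  unfolding coupling_step_def Let_def fW_def gZ_def cX_def by simp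

lemma step_fst:
  assumes "finite T" "T \<noteq> {}" "T = S j xs"
  shows "map_pmf fst (coupling_step S n k j xs) = pmf_of_set T"
proof -
  have inner: "bind_pmf (seq_pmf (map (fW T) Ys)) (cX T k Ys) = pmf_of_set T"
    if Ys: "Ys \<in> set_pmf (seq_pmf (replicate k (pmf_of_set {1..n})))" for Ys
  proof -
    have len: "length Ys = k" using seq_pmf_set[OF Ys] by simp
    define I where "I = {i. i < k \<and> Ys ! i \<in> T}"
    show ?thesis
    proof (cases "I = {}")
      case True
      then show ?thesis unfolding cX_def I_def[symmetric] by simp
    next
      case False
      have fI: "finite I" unfolding I_def by auto
      have "bind_pmf (seq_pmf (map (fW T) Ys)) (cX T k Ys) =
          bind_pmf (seq_pmf (map (fW T) Ys)) (\<lambda>Ws. bind_pmf (pmf_of_set I) (\<lambda>i. return_pmf (the (Ws ! i))))"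
        unfolding cX_def I_def[symmetric] using False by (simp add: map_pmf_def)
      also have "\<dots> = bind_pmf (pmf_of_set I) (\<lambda>i. map_pmf (\<lambda>Ws. the (Ws ! i)) (seq_pmf (map (fW T) Ys)))"
        by (subst bind_commute_pmf) (simp add: map_pmf_def)
      also have "\<dots> = bind_pmf (pmf_of_set I) (\<lambda>i. pmf_of_set T)"
      proof (intro bind_pmf_cong refl)
        fix i assume "i \<in> set_pmf (pmf_of_set I)"
        then have i: "i \<in> I" using False fI by simp
        have "map_pmf (\<lambda>Ws. the (Ws ! i)) (seq_pmf (map (fW T) Ys)) =
              map_pmf the (map_pmf (\<lambda>Ws. Ws ! i) (seq_pmf (map (fW T) Ys)))"
          by (simp add: pmf.map_comp o_def)
        also have "\<dots> = map_pmf the (fW T (Ys ! i))"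
          using i len by (subst seq_pmf_nth) (auto simp: I_def)
        also have "\<dots> = pmf_of_set T"
          using i by (simp add: I_def fW_def pmf.map_comp o_def)
        finally show "map_pmf (\<lambda>Ws. the (Ws ! i)) (seq_pmf (map (fW T) Ys)) = pmf_of_set T" .
      qed
      also have "\<dots> = pmf_of_set T" by simp
      finally show ?thesis .
    qed
  qed
  have "map_pmf fst (coupling_step S n k j xs) =
      bind_pmf (seq_pmf (replicate k (pmf_of_set {1..n}))) (\<lambda>Ys. bind_pmf (seq_pmf (map (fW T) Ys)) (cX T k Ys))"
    unfolding coupling_step_alt assms(3)[symmetric] by (simp add: map_bind_pmf bind_return_pmf')
  also have "\<dots> = bind_pmf (seq_pmf (replicate k (pmf_of_set {1..n}))) (\<lambda>Ys. pmf_of_set T)"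
    by (intro bind_pmf_cong refl inner)
  finally show ?thesis by simp
qed

lemma coord_uniform:
  assumes "T \<subseteq> {1..n}" "T \<noteq> {}" "n > 0"
  shows "bind_pmf (pmf_of_set {1..n}) (\<lambda>y. map_pmf (gZ y) (fW T y)) = pmf_of_set {1..n}"
proof -
  have fT: "finite T" using assms(1) finite_subset by blast
  have eq: "map_pmf (gZ y) (fW T y) = (if y \<in> T then pmf_of_set T else return_pmf y)" for y
    by (simp add: fW_def gZ_def pmf.map_comp o_def)
  show ?thesis
  proof (rule pmf_eqI)
    fix z
    have ne: "{1..n} \<noteq> {}" using assms by auto
    have "pmf (bind_pmf (pmf_of_set {1..n}) (\<lambda>y. map_pmf (gZ y) (fW T y))) z =
        (\<Sum>y\<in>{1..n}. pmf (if y \<in> T then pmf_of_set T else return_pmf y) z) / card {1..n}"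
      using ne by (subst pmf_bind_pmf_of_set) (auto simp: eq)
    also have "(\<Sum>y\<in>{1..n}. pmf (if y \<in> T then pmf_of_set T else return_pmf y) z) =
        (\<Sum>y\<in>T. pmf (pmf_of_set T) z) + (\<Sum>y\<in>{1..n}-T. pmf (return_pmf y) z)"
    proof -
      have "{1..n} = T \<union> ({1..n} - T)" using assms by auto
      then have "(\<Sum>y\<in>{1..n}. pmf (if y \<in> T then pmf_of_set T else return_pmf y) z) =
          (\<Sum>y\<in>T. pmf (if y \<in> T then pmf_of_set T else return_pmf y) z) +
          (\<Sum>y\<in>{1..n}-T. pmf (if y \<in> T then pmf_of_set T else return_pmf y) z)"
        by (metis (no_types, lifting) Diff_disjoint finite_Diff finite_atLeastAtMost fT sum.union_disjoint)
      then show ?thesis by simp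
    qed
    also have "(\<Sum>y\<in>T. pmf (pmf_of_set T) z) = indicator T z"
      using fT assms(2) by (simp add: card_gt_0_iff)
    also have "(\<Sum>y\<in>{1..n}-T. pmf (return_pmf y) z) = indicator ({1..n} - T) z"
      by (simp add: pmf_return indicator_def)
    also have "indicator T z + indicator ({1..n} - T) z = (indicator {1..n} z :: real)"
      using assms(1) by (auto simp: indicator_def)
    finally show "pmf (bind_pmf (pmf_of_set {1..n}) (\<lambda>y. map_pmf (gZ y) (fW T y))) z = pmf (pmf_of_set {1..n}) z"
      using ne by simp
  qed
qed

lemma step_snd:
  assumes "T \<subseteq> {1..n}" "T \<noteq> {}" "n > 0" "T = S j xs"
  shows "map_pmf snd (coupling_step S n k j xs) = seq_pmf (replicate k (pmf_of_set {1..n}))"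
proof -
  have "map_pmf snd (coupling_step S n k j xs) =
      bind_pmf (seq_pmf (replicate k (pmf_of_set {1..n}))) (\<lambda>Ys. map_pmf (map2 gZ Ys) (seq_pmf (map (fW T) Ys)))"
    unfolding coupling_step_alt assms(4)[symmetric] by (simp add: map_bind_pmf, simp add: map_pmf_def)
  also have "\<dots> = seq_pmf (map (\<lambda>p. bind_pmf p (\<lambda>y. map_pmf (gZ y) (fW T y))) (replicate k (pmf_of_set {1..n})))"
    by (rule seq_pmf_map2)
  also have "\<dots> = seq_pmf (replicate k (pmf_of_set {1..n}))"
    using coord_uniform[OF assms(1-3)] by simp
  finally show ?thesis .
qed

lemma seq_all_prob:
  "emeasure (measure_pmf (seq_pmf (replicate m P))) {ys. \<forall>y\<in>set ys. y \<in> B} = emeasure (measure_pmf P) B ^ m"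
proof (induction m)
  case 0 then show ?case by simp
next
  case (Suc m)
  have "seq_pmf (replicate (Suc m) P) = bind_pmf P (\<lambda>y. map_pmf (Cons y) (seq_pmf (replicate m P)))"
    by (simp add: map_pmf_def)
  then have "emeasure (measure_pmf (seq_pmf (replicate (Suc m) P))) {ys. \<forall>y\<in>set ys. y \<in> B} =
     (\<integral>\<^sup>+ y. emeasure (measure_pmf (seq_pmf (replicate m P))) (Cons y -` {ys. \<forall>y\<in>set ys. y \<in> B}) \<partial>P)"
    by simp
  also have "\<dots> = (\<integral>\<^sup>+ y. emeasure (measure_pmf (seq_pmf (replicate m P))) {ys. \<forall>y\<in>set ys. y \<in> B} * indicator B y \<partial>P)"
    by (intro nn_integral_cong) (auto simp: indicator_def)
  also have "\<dots> = emeasure (measure_pmf (seq_pmf (replicate m P))) {ys. \<forall>y\<in>set ys. y \<in> B} * emeasure (measure_pmf P) B"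
    by (subst nn_integral_cmult) auto
  finally show ?case using Suc by (simp add: mult.commute)
qed

lemma step_bad:
  assumes "finite T" "T = S j xs"
  shows "emeasure (measure_pmf (coupling_step S n k j xs)) {r. fst r \<notin> set (snd r)} \<le>
         emeasure (measure_pmf (seq_pmf (replicate k (pmf_of_set {1..n})))) {ys. \<forall>y\<in>set ys. y \<in> -T}"
proof -
  let ?A = "seq_pmf (replicate k (pmf_of_set {1..n}))"
  let ?E = "{ys. \<forall>y\<in>set ys. y \<in> -T}"
  let ?K = "\<lambda>Ys. bind_pmf (seq_pmf (map (fW T) Ys))
     (\<lambda>Ws. bind_pmf (cX T k Ys Ws) (\<lambda>X. return_pmf (X, map2 gZ Ys Ws)))"
  have "emeasure (measure_pmf (coupling_step S n k j xs)) {r. fst r \<notin> set (snd r)} =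
      (\<integral>\<^sup>+ Ys. emeasure (measure_pmf (?K Ys)) {r. fst r \<notin> set (snd r)} \<partial>?A)"
    unfolding coupling_step_alt assms(2)[symmetric] by simp
  also have "\<dots> \<le> (\<integral>\<^sup>+ Ys. indicator ?E Ys \<partial>?A)"
  proof (intro nn_integral_mono_AE AE_pmfI)
    fix Ys assume Ys: "Ys \<in> set_pmf ?A"
    have len: "length Ys = k" using seq_pmf_set[OF Ys] by simp
    show "emeasure (measure_pmf (?K Ys)) {r. fst r \<notin> set (snd r)} \<le> indicator ?E Ys"
    proof (cases "Ys \<in> ?E")
      case True
      then have "indicator ?E Ys = (1::ennreal)" by simp
      then show ?thesis using measure_pmf.emeasure_le_1 by metis
    next
      case False
      define I where "I = {i. i < k \<and> Ys ! i \<in> T}"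
      from False obtain i where i: "i \<in> I" using len by (auto simp: I_def in_set_conv_nth)
      have fI: "finite I" unfolding I_def by auto
      have "fst r \<in> set (snd r)" if r0: "r \<in> set_pmf (?K Ys)" for r
      proof -
        obtain X Zs where rr: "r = (X, Zs)" by fastforce
        have r: "(X, Zs) \<in> set_pmf (?K Ys)" using r0 rr by simp
        from r obtain Ws where Ws: "Ws \<in> set_pmf (seq_pmf (map (fW T) Ys))"
          and X: "X \<in> set_pmf (cX T k Ys Ws)" and Zs: "Zs = map2 gZ Ys Ws" by auto
        have lW: "length Ws = k" and Wi: "\<And>i. i < k \<Longrightarrow> Ws ! i \<in> set_pmf (fW T (Ys ! i))"
          using seq_pmf_set[OF Ws] len by auto
        have "I \<noteq> {}" using i by auto
        then obtain i' where i': "i' \<in> I" and Xi: "X = the (Ws ! i')"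
          using X fI unfolding cX_def I_def[symmetric] by auto
        have "i' < k" "Ys ! i' \<in> T" using i' by (auto simp: I_def)
        then obtain w where "Ws ! i' = Some w" using Wi[of i'] by (auto simp: fW_def)
        then have "Zs ! i' = X" using Xi Zs lW len \<open>i' < k\<close> by (simp add: gZ_def)
        then have "X \<in> set Zs" using Zs lW len \<open>i' < k\<close> by (metis length_map length_zip min.idem nth_mem)
        then show ?thesis using rr by simp
      qed
      then have "set_pmf (?K Ys) \<inter> {r. fst r \<notin> set (snd r)} = {}" by blast
      then have "measure (measure_pmf (?K Ys)) {r. fst r \<notin> set (snd r)} = 0"
        by (simp add: measure_pmf_zero_iff)
      then show ?thesis by (simp add: measure_pmf.emeasure_eq_measure)
    qed
  qed
  also have "\<dots> = emeasure (measure_pmf ?A) ?E" by simp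
  finally show ?thesis .
qed



lemma indep_map_pmf:
  assumes ind: "prob_space.indep_vars (measure_pmf (map_pmf F p)) (\<lambda>_. count_space UNIV) X I"
    and ne: "I \<noteq> {}"
  shows "prob_space.indep_vars (measure_pmf p) (\<lambda>_. count_space UNIV) (\<lambda>i x. X i (F x)) I"
proof -
  let ?C = "count_space UNIV"
  have eq: "distr (distr (measure_pmf p) ?C F) (Pi\<^sub>M I (\<lambda>_. ?C)) (\<lambda>x. \<lambda>i\<in>I. X i x) =
        Pi\<^sub>M I (\<lambda>i. distr (distr (measure_pmf p) ?C F) ?C (X i))"
    using ind ne
    by (subst (asm) prob_space.indep_vars_iff_distr_eq_PiM'[OF measure_pmf.prob_space_axioms])
       (auto simp: map_pmf_rep_eq)
  have m1: "(\<lambda>x. \<lambda>i\<in>I. X i x) \<in> measurable ?C (Pi\<^sub>M I (\<lambda>_. ?C))"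
    by (auto simp: space_PiM PiE_iff)
  have "distr (measure_pmf p) (Pi\<^sub>M I (\<lambda>_. ?C)) (\<lambda>x. \<lambda>i\<in>I. X i (F x)) =
        Pi\<^sub>M I (\<lambda>i. distr (measure_pmf p) ?C (\<lambda>x. X i (F x)))"
  proof -
    have "distr (measure_pmf p) (Pi\<^sub>M I (\<lambda>_. ?C)) (\<lambda>x. \<lambda>i\<in>I. X i (F x)) =
        distr (distr (measure_pmf p) ?C F) (Pi\<^sub>M I (\<lambda>_. ?C)) (\<lambda>x. \<lambda>i\<in>I. X i x)"
      by (subst distr_distr) (auto simp: m1 o_def space_PiM PiE_iff)
    also have "\<dots> = Pi\<^sub>M I (\<lambda>i. distr (distr (measure_pmf p) ?C F) ?C (X i))" by (rule eq)
    also have "\<dots> = Pi\<^sub>M I (\<lambda>i. distr (measure_pmf p) ?C (\<lambda>x. X i (F x)))"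
      by (intro PiM_cong refl) (simp add: distr_distr o_def)
    finally show ?thesis .
  qed
  then show ?thesis
    using ne by (subst prob_space.indep_vars_iff_distr_eq_PiM'[OF measure_pmf.prob_space_axioms]) auto
qed

definition Good :: "(nat \<Rightarrow> nat list \<Rightarrow> nat set) \<Rightarrow> nat \<Rightarrow> nat \<Rightarrow> bool" where
  "Good S n t = (\<forall>j xs. j \<in> {1..t} \<longrightarrow> length xs = j - 1 \<longrightarrow> set xs \<subseteq> {1..n} \<longrightarrow>
       S j xs \<subseteq> {1..n} \<and> S j xs \<noteq> {})"

lemma GoodD:
  assumes "Good S n t" "Suc j \<le> t" "length xs = j" "set xs \<subseteq> {1..n}"
  shows "S (Suc j) xs \<subseteq> {1..n}" "S (Suc j) xs \<noteq> {}" "finite (S (Suc j) xs)"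
proof -
  have *: "S (Suc j) xs \<subseteq> {1..n} \<and> S (Suc j) xs \<noteq> {}"
    using assms(1)[unfolded Good_def, rule_format, of "Suc j" xs] assms(2-4) by auto
  then show "S (Suc j) xs \<subseteq> {1..n}" "S (Suc j) xs \<noteq> {}" by auto
  show "finite (S (Suc j) xs)" using * finite_subset by blast
qed

lemma coupling_Suc_map:
  "coupling S n k (Suc j) = bind_pmf (coupling S n k j) (\<lambda>h. map_pmf (\<lambda>r. h @ [r]) (coupling_step S n k (Suc j) (map fst h)))"
  by (simp add: map_pmf_def)

lemma coupling_support:
  assumes "Good S n t" "j \<le> t" "h \<in> set_pmf (coupling S n k j)"
  shows "length h = j \<and> set (map fst h) \<subseteq> {1..n}"
  using assms(2,3)
proof (induction j arbitrary: h)
  case 0 then show ?case by simp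
next
  case (Suc j)
  from Suc.prems obtain h0 r where h: "h = h0 @ [r]" and h0: "h0 \<in> set_pmf (coupling S n k j)"
    and r: "r \<in> set_pmf (coupling_step S n k (Suc j) (map fst h0))" by auto
  have IH: "length h0 = j \<and> set (map fst h0) \<subseteq> {1..n}" using Suc.IH[OF _ h0] Suc.prems by simp
  note G = GoodD[OF assms(1) Suc.prems(1), of "map fst h0"]
  have "fst r \<in> set_pmf (map_pmf fst (coupling_step S n k (Suc j) (map fst h0)))" using r by simp
  also have "\<dots> = S (Suc j) (map fst h0)" using G IH by (subst step_fst[OF _ _ refl]) auto
  finally show ?case using IH G h by auto
qed

lemma coupling_X:
  assumes "Good S n t" "j \<le> t"
  shows "map_pmf (map fst) (coupling S n k j) = adaptive S j"
  using assms(2)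
proof (induction j)
  case 0 then show ?case by simp
next
  case (Suc j)
  have "map_pmf (map fst) (coupling S n k (Suc j)) =
     bind_pmf (coupling S n k j) (\<lambda>h. bind_pmf (map_pmf fst (coupling_step S n k (Suc j) (map fst h)))
        (\<lambda>x. return_pmf (map fst h @ [x])))"
    by (simp add: map_bind_pmf bind_map_pmf)
  also have "\<dots> = bind_pmf (coupling S n k j) (\<lambda>h. bind_pmf (pmf_of_set (S (Suc j) (map fst h)))
        (\<lambda>x. return_pmf (map fst h @ [x])))"
  proof (intro bind_pmf_cong refl)
    fix h assume h: "h \<in> set_pmf (coupling S n k j)"
    have IH: "length h = j \<and> set (map fst h) \<subseteq> {1..n}" using coupling_support[OF assms(1) _ h] Suc.prems by simp
    note G = GoodD[OF assms(1) Suc.prems(1), of "map fst h"]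
    show "map_pmf fst (coupling_step S n k (Suc j) (map fst h)) = pmf_of_set (S (Suc j) (map fst h))"
      using G IH by (subst step_fst[OF _ _ refl]) auto
  qed
  also have "\<dots> = bind_pmf (map_pmf (map fst) (coupling S n k j)) (\<lambda>xs. bind_pmf (pmf_of_set (S (Suc j) xs))
        (\<lambda>x. return_pmf (xs @ [x])))"
    by (simp add: bind_map_pmf)
  also have "\<dots> = adaptive S (Suc j)" using Suc by simp
  finally show ?case .
qed



definition FZ :: "nat \<Rightarrow> nat \<Rightarrow> (nat \<times> nat list) list \<Rightarrow> nat \<times> nat \<Rightarrow> nat" where
  "FZ k j h = (\<lambda>(a,b). if (a,b) \<in> {1..j}\<times>{1..k} then snd (h!(a-1))!(b-1) else 0)"

definition GZ :: "nat \<Rightarrow> nat \<Rightarrow> nat list \<Rightarrow> nat \<times> nat \<Rightarrow> nat" where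
  "GZ k j zs = (\<lambda>(a,b). if (a,b) \<in> {Suc j}\<times>{1..k} then zs!(b-1) else 0)"

lemma GZ_Pi: "map_pmf (GZ k j) (seq_pmf (replicate k P)) = Pi_pmf ({Suc j}\<times>{1..k}) 0 (\<lambda>_. P)"
proof -
  define hh where "hh = (\<lambda>(a::nat,b::nat). if (a,b) \<in> {Suc j}\<times>{1..k} then b - 1 else k)"
  have bij: "bij_betw hh ({Suc j}\<times>{1..k}) {..<k}"
  proof (rule bij_betw_byWitness[where f' = "\<lambda>i. (Suc j, Suc i)"])
    show "\<forall>a\<in>{Suc j} \<times> {1..k}. (Suc j, Suc (hh a)) = a" by (auto simp: hh_def)
    show "\<forall>a'\<in>{..<k}. hh (Suc j, Suc a') = a'" by (auto simp: hh_def)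
    show "hh ` ({Suc j} \<times> {1..k}) \<subseteq> {..<k}" by (auto simp: hh_def)
    show "(\<lambda>i. (Suc j, Suc i)) ` {..<k} \<subseteq> {Suc j} \<times> {1..k}" by auto
  qed
  have "Pi_pmf ({Suc j}\<times>{1..k}) 0 (\<lambda>_. P) = map_pmf (\<lambda>g. g \<circ> hh) (Pi_pmf {..<k} 0 (\<lambda>_. P))"
    by (rule Pi_pmf_bij_betw[OF _ bij]) (auto simp: hh_def split: if_splits)
  also have "\<dots> = map_pmf (\<lambda>g. g \<circ> hh) (map_pmf (\<lambda>zs i. if i < k then zs!i else 0) (seq_pmf (replicate k P)))"
    by (simp add: seq_pmf_Pi)
  also have "\<dots> = map_pmf (GZ k j) (seq_pmf (replicate k P))"
  proof -
    have e: "(\<lambda>zs. (\<lambda>i. if i < k then zs!i else 0) \<circ> hh) = GZ k j"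
      by (auto simp: fun_eq_iff GZ_def hh_def)
    have "map_pmf (\<lambda>g. g \<circ> hh) (map_pmf (\<lambda>zs i. if i < k then zs!i else 0) (seq_pmf (replicate k P))) =
      map_pmf (\<lambda>zs. (\<lambda>i. if i < k then zs!i else (0::nat)) \<circ> hh) (seq_pmf (replicate k P))"
      by (simp only: pmf.map_comp o_def)
    then show ?thesis by (simp only: e)
  qed
  finally show ?thesis ..
qed

lemma FZ_snoc:
  assumes "length h = j"
  shows "FZ k (Suc j) (h @ [r]) = (\<lambda>x. if x \<in> {1..j}\<times>{1..k} then FZ k j h x else GZ k j (snd r) x)"
  using assms by (auto simp: fun_eq_iff FZ_def GZ_def nth_append)

lemma coupling_Z:
  assumes "Good S n t" "j \<le> t" "n > 0"
  shows "map_pmf (FZ k j) (coupling S n k j) = Pi_pmf ({1..j}\<times>{1..k}) 0 (\<lambda>_. pmf_of_set {1..n})"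
  using assms(2)
proof (induction j)
  case 0
  then show ?case by (simp add: FZ_def fun_eq_iff)
next
  case (Suc j)
  let ?U = "pmf_of_set {1..n::nat}"
  let ?A = "{1..j}\<times>{1..k}" and ?B = "{Suc j}\<times>{1..k}"
  let ?mg = "\<lambda>f g x. if x \<in> ?A then f x else g x"
  have "map_pmf (FZ k (Suc j)) (coupling S n k (Suc j)) =
     bind_pmf (coupling S n k j) (\<lambda>h. bind_pmf (coupling_step S n k (Suc j) (map fst h))
        (\<lambda>r. return_pmf (FZ k (Suc j) (h @ [r]))))"
    by (simp add: map_bind_pmf)
  also have "\<dots> = bind_pmf (coupling S n k j) (\<lambda>h. bind_pmf (map_pmf snd (coupling_step S n k (Suc j) (map fst h)))
        (\<lambda>zs. return_pmf (?mg (FZ k j h) (GZ k j zs))))"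
  proof (intro bind_pmf_cong refl)
    fix h assume h: "h \<in> set_pmf (coupling S n k j)"
    have IH: "length h = j \<and> set (map fst h) \<subseteq> {1..n}" using coupling_support[OF assms(1) _ h] Suc.prems by simp
    show "bind_pmf (coupling_step S n k (Suc j) (map fst h)) (\<lambda>r. return_pmf (FZ k (Suc j) (h @ [r]))) =
      bind_pmf (map_pmf snd (coupling_step S n k (Suc j) (map fst h))) (\<lambda>zs. return_pmf (?mg (FZ k j h) (GZ k j zs)))"
      using IH by (simp add: bind_map_pmf FZ_snoc)
  qed
  also have "\<dots> = bind_pmf (coupling S n k j) (\<lambda>h. bind_pmf (seq_pmf (replicate k ?U))
        (\<lambda>zs. return_pmf (?mg (FZ k j h) (GZ k j zs))))"
  proof (intro bind_pmf_cong refl)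
    fix h assume h: "h \<in> set_pmf (coupling S n k j)"
    have IH: "length h = j \<and> set (map fst h) \<subseteq> {1..n}" using coupling_support[OF assms(1) _ h] Suc.prems by simp
    note G = GoodD[OF assms(1) Suc.prems(1), of "map fst h"]
    show "map_pmf snd (coupling_step S n k (Suc j) (map fst h)) = seq_pmf (replicate k ?U)"
      using G IH assms(3) by (intro step_snd[OF _ _ _ refl]) auto
  qed
  also have "\<dots> = bind_pmf (map_pmf (FZ k j) (coupling S n k j)) (\<lambda>f. bind_pmf (map_pmf (GZ k j) (seq_pmf (replicate k ?U)))
        (\<lambda>g. return_pmf (?mg f g)))"
    by (simp add: bind_map_pmf)
  also have "\<dots> = bind_pmf (Pi_pmf ?A 0 (\<lambda>_. ?U)) (\<lambda>f. bind_pmf (Pi_pmf ?B 0 (\<lambda>_. ?U))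
        (\<lambda>g. return_pmf (?mg f g)))"
    using Suc by (simp add: GZ_Pi)
  also have "\<dots> = map_pmf (\<lambda>(f,g) x. if x \<in> ?A then f x else g x) (pair_pmf (Pi_pmf ?A 0 (\<lambda>_. ?U)) (Pi_pmf ?B 0 (\<lambda>_. ?U)))"
    by (simp add: pair_pmf_def map_bind_pmf bind_assoc_pmf bind_return_pmf)
  also have "\<dots> = Pi_pmf (?A \<union> ?B) 0 (\<lambda>_. ?U)"
    by (rule Pi_pmf_union[symmetric]) auto
  also have "?A \<union> ?B = {1..Suc j}\<times>{1..k}" by auto
  finally show ?case .
qed

definition Bad :: "(nat \<times> nat list) list \<Rightarrow> bool" where
  "Bad h = (\<exists>a<length h. fst (h!a) \<notin> set (snd (h!a)))"

lemma coupling_bad: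
  assumes "Good S n t" "j \<le> t"
    and q: "\<And>j xs. Suc j \<le> t \<Longrightarrow> length xs = j \<Longrightarrow> set xs \<subseteq> {1..n} \<Longrightarrow>
       emeasure (measure_pmf (coupling_step S n k (Suc j) xs)) {r. fst r \<notin> set (snd r)} \<le> q"
  shows "emeasure (measure_pmf (coupling S n k j)) {h. Bad h} \<le> of_nat j * q"
  using assms(2)
proof (induction j)
  case 0 then show ?case by (simp add: Bad_def)
next
  case (Suc j)
  have "emeasure (measure_pmf (coupling S n k (Suc j))) {h. Bad h} =
     (\<integral>\<^sup>+ h. emeasure (measure_pmf (coupling_step S n k (Suc j) (map fst h))) ((\<lambda>r. h @ [r]) -` {h. Bad h})
       \<partial>coupling S n k j)"
    unfolding coupling_Suc_map by simp
  also have "\<dots> \<le> (\<integral>\<^sup>+ h. indicator {h. Bad h} h + q \<partial>coupling S n k j)"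
  proof (intro nn_integral_mono_AE AE_pmfI)
    fix h assume h: "h \<in> set_pmf (coupling S n k j)"
    have IH: "length h = j \<and> set (map fst h) \<subseteq> {1..n}" using coupling_support[OF assms(1) _ h] Suc.prems by simp
    show "emeasure (measure_pmf (coupling_step S n k (Suc j) (map fst h))) ((\<lambda>r. h @ [r]) -` {h. Bad h})
         \<le> indicator {h. Bad h} h + q"
    proof (cases "Bad h")
      case True
      then have "indicator {h. Bad h} h + q = 1 + q" by simp
      moreover have "emeasure (measure_pmf (coupling_step S n k (Suc j) (map fst h))) ((\<lambda>r. h @ [r]) -` {h. Bad h}) \<le> 1"
        by (rule measure_pmf.emeasure_le_1)
      ultimately show ?thesis by (metis add_increasing2 zero_le order_trans)
    next
      case False
      have "(\<lambda>r. h @ [r]) -` {h. Bad h} = {r. fst r \<notin> set (snd r)}"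
        using False IH by (auto simp: Bad_def nth_append less_Suc_eq)
      then have "emeasure (measure_pmf (coupling_step S n k (Suc j) (map fst h))) ((\<lambda>r. h @ [r]) -` {h. Bad h}) \<le> q"
        using q[of j "map fst h"] IH Suc.prems by simp
      then show ?thesis using False by simp
    qed
  qed
  also have "\<dots> = emeasure (measure_pmf (coupling S n k j)) {h. Bad h} + q"
    by (subst nn_integral_add) (auto simp: measure_pmf.emeasure_space_1)
  also have "\<dots> \<le> of_nat j * q + q" using Suc by (intro add_mono) auto
  also have "\<dots> = of_nat (Suc j) * q" by (simp add: algebra_simps)
  finally show ?case .
qed



theorem mainTheorem3:
  fixes n t k :: nat and \<sigma> \<alpha> :: real and S :: "nat \<Rightarrow> nat list \<Rightarrow> nat set"
  assumes "n > 0" "t > 0"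
    and "0 < \<sigma>" "\<sigma> \<le> 1" "\<sigma> * real n \<in> \<int>"
    and "\<alpha> > 0" "k > 0" "real k = \<alpha> / \<sigma>"
    and "\<And>j xs. j \<in> {1..t} \<Longrightarrow> length xs = j - 1 \<Longrightarrow> set xs \<subseteq> {1..n} \<Longrightarrow>
           S j xs \<subseteq> {1..n} \<and> real (card (S j xs)) = \<sigma> * real n"
  shows "map_pmf (map fst) (coupling S n k t) = adaptive S t \<and>
      (\<forall>j\<in>{1..t}. \<forall>i\<in>{1..k}.
           map_pmf (\<lambda>h. snd (h ! (j - 1)) ! (i - 1)) (coupling S n k t) = pmf_of_set {1..n}) \<and>
      prob_space.indep_vars (measure_pmf (coupling S n k t)) (\<lambda>_. count_space UNIV)
           (\<lambda>(j, i) h. snd (h ! (j - 1)) ! (i - 1)) ({1..t} \<times> {1..k}) \<and>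
      measure_pmf.prob (coupling S n k t)
           {h. set (map fst h) \<subseteq> (\<Union>r\<in>set h. set (snd r))}
         \<ge> 1 - real t * (1 - \<sigma>) powr (\<alpha> / \<sigma>)"
proof -
  note H = assms(9)
  have Gd: "Good S n t"
    unfolding Good_def
  proof (intro allI impI conjI)
    fix j xs assume a: "j \<in> {1..t}" "length xs = j - 1" "set xs \<subseteq> {1..n}"
    show "S j xs \<subseteq> {1..n}" using H[OF a] by simp
    have "real (card (S j xs)) > 0" using H[OF a] assms(1,3) by simp
    then show "S j xs \<noteq> {}" by auto
  qed
  let ?U = "pmf_of_set {1..n::nat}"
  let ?I = "{1..t}\<times>{1..k}"
  have PZ: "map_pmf (FZ k t) (coupling S n k t) = Pi_pmf ?I 0 (\<lambda>_. ?U)"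
    using coupling_Z[OF Gd le_refl assms(1)] .
  have pa: "map_pmf (map fst) (coupling S n k t) = adaptive S t"
    using coupling_X[OF Gd le_refl] .
  have pb: "map_pmf (\<lambda>h. snd (h ! (j - 1)) ! (i - 1)) (coupling S n k t) = ?U"
    if ji: "j \<in> {1..t}" "i \<in> {1..k}" for j i
  proof -
    have "map_pmf (\<lambda>h. snd (h ! (j - 1)) ! (i - 1)) (coupling S n k t) =
          map_pmf (\<lambda>f. f (j, i)) (map_pmf (FZ k t) (coupling S n k t))"
      using ji by (simp add: pmf.map_comp o_def FZ_def)
    also have "\<dots> = ?U" using ji by (simp add: PZ Pi_pmf_component)
    finally show ?thesis .
  qed
  have pc: "prob_space.indep_vars (measure_pmf (coupling S n k t)) (\<lambda>_. count_space UNIV)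
           (\<lambda>(j, i) h. snd (h ! (j - 1)) ! (i - 1)) ?I"
  proof -
    have "prob_space.indep_vars (measure_pmf (map_pmf (FZ k t) (coupling S n k t))) (\<lambda>_. count_space UNIV)
          (\<lambda>x f. f x) ?I"
      unfolding PZ by (rule indep_vars_Pi_pmf) auto
    then have "prob_space.indep_vars (measure_pmf (coupling S n k t)) (\<lambda>_. count_space UNIV)
          (\<lambda>x h. FZ k t h x) ?I"
      by (rule indep_map_pmf) (use assms(2,7) in auto)
    then show ?thesis
      by (subst (asm) prob_space.indep_vars_cong[OF measure_pmf.prob_space_axioms, where
            Y = "\<lambda>(j, i) h. snd (h ! (j - 1)) ! (i - 1)" and J = ?I and N' = "\<lambda>_. count_space UNIV"])
         (auto simp: FZ_def fun_eq_iff)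
  qed
  define q where "q = (1 - \<sigma>) ^ k"
  have q0: "q \<ge> 0" unfolding q_def using assms(4) by simp
  have qstep: "emeasure (measure_pmf (coupling_step S n k (Suc j) xs)) {r. fst r \<notin> set (snd r)} \<le> ennreal q"
    if a: "Suc j \<le> t" "length xs = j" "set xs \<subseteq> {1..n}" for j xs
  proof -
    let ?T = "S (Suc j) xs"
    have HT: "?T \<subseteq> {1..n}" "real (card ?T) = \<sigma> * real n" using H[of "Suc j" xs] a by auto
    have fT: "finite ?T" using HT(1) finite_subset by blast
    have "emeasure (measure_pmf (coupling_step S n k (Suc j) xs)) {r. fst r \<notin> set (snd r)} \<le>
          emeasure (measure_pmf (seq_pmf (replicate k ?U))) {ys. \<forall>y\<in>set ys. y \<in> - ?T}"
      by (rule step_bad[where S=S and j="Suc j" and xs=xs, OF fT refl])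
    also have "\<dots> = emeasure (measure_pmf ?U) (- ?T) ^ k" by (rule seq_all_prob)
    also have "emeasure (measure_pmf ?U) (- ?T) = ennreal (1 - \<sigma>)"
    proof -
      have ne: "{1..n} \<noteq> {}" using assms(1) by auto
      have "card ({1..n} \<inter> - ?T) = card ({1..n} - ?T)" by (simp add: Diff_eq)
      also have "\<dots> = n - card ?T" using HT(1) fT by (simp add: card_Diff_subset)
      finally have c: "real (card ({1..n} \<inter> - ?T)) = real n - \<sigma> * real n"
        using HT by (metis card_atLeastAtMost card_mono diff_Suc_1 finite_atLeastAtMost of_nat_diff)
      have "emeasure (measure_pmf ?U) (- ?T) = ennreal (measure (measure_pmf ?U) (- ?T))"
        by (simp add: measure_pmf.emeasure_eq_measure)
      also have "measure (measure_pmf ?U) (- ?T) = real (card ({1..n} \<inter> - ?T)) / real n"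
        using ne by (simp add: measure_pmf_of_set)
      also have "\<dots> = 1 - \<sigma>" using c assms(1) by (simp add: field_simps)
      finally show ?thesis .
    qed
    also have "ennreal (1 - \<sigma>) ^ k = ennreal q" unfolding q_def using assms(4) by (simp add: ennreal_power)
    finally show ?thesis .
  qed
  have eb: "emeasure (measure_pmf (coupling S n k t)) {h. Bad h} \<le> of_nat t * ennreal q"
    by (rule coupling_bad[OF Gd le_refl qstep])
  have mb: "measure (measure_pmf (coupling S n k t)) {h. Bad h} \<le> real t * q"
  proof -
    have "ennreal (measure (measure_pmf (coupling S n k t)) {h. Bad h}) \<le> ennreal (real t * q)"
      using eb by (simp add: measure_pmf.emeasure_eq_measure ennreal_mult' q0 ennreal_of_nat_eq_real_of_nat)
    then show ?thesis using q0 by (simp add: ennreal_le_iff)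
  qed
  have sub: "- {h. Bad h} \<subseteq> {h. set (map fst h) \<subseteq> (\<Union>r\<in>set h. set (snd r))}"
  proof
    fix h assume "h \<in> - {h. Bad h}"
    then have nb: "\<And>a. a < length h \<Longrightarrow> fst (h!a) \<in> set (snd (h!a))" by (auto simp: Bad_def)
    show "h \<in> {h. set (map fst h) \<subseteq> (\<Union>r\<in>set h. set (snd r))}"
    proof (simp only: mem_Collect_eq, rule subsetI)
      fix x assume "x \<in> set (map fst h)"
      then obtain a where a: "a < length h" "x = fst (h!a)" by (auto simp: in_set_conv_nth)
      then show "x \<in> (\<Union>r\<in>set h. set (snd r))" using nb[OF a(1)] nth_mem by blast
    qed
  qed
  have "1 - real t * q \<le> 1 - measure (measure_pmf (coupling S n k t)) {h. Bad h}" using mb by simp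
  also have "\<dots> = measure (measure_pmf (coupling S n k t)) (- {h. Bad h})"
    using measure_pmf.prob_compl[of "{h. Bad h}" "coupling S n k t"] by (simp add: Compl_eq_Diff_UNIV)
  also have "\<dots> \<le> measure (measure_pmf (coupling S n k t)) {h. set (map fst h) \<subseteq> (\<Union>r\<in>set h. set (snd r))}"
    by (rule measure_pmf.finite_measure_mono[OF sub]) simp
  finally have pd0: "1 - real t * q \<le> measure (measure_pmf (coupling S n k t)) {h. set (map fst h) \<subseteq> (\<Union>r\<in>set h. set (snd r))}" .
  have qpow: "(1 - \<sigma>) powr (\<alpha> / \<sigma>) = q"
  proof (cases "\<sigma> = 1")
    case True
    then show ?thesis unfolding q_def using assms(7) by simp
  next
    case False
    then have "1 - \<sigma> > 0" using assms(4) by simp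
    then show ?thesis unfolding q_def assms(8)[symmetric] by (simp add: powr_realpow)
  qed
  show ?thesis using pa pb pc pd0 qpow by auto
qed

end
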